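(* For every integer $n$, $$(1+A(n,5))(1+A(n,11))\prod_{p\ge 17}(1+A(n,p))\ \ge\ 0.902985,$$ where the product runs over primes $p\ge 17$.
   Context: For integers $q\ge1$, $a$ and $i\in\{2,3\}$ let $C_i(q,a)=\sum_{1\le m\le q,\ (m,q)=1} e(am^i/q)$, where $e(x)=e^{2\pi i x}$. For an integer $n$ define $$A(n,q)=\frac{\mu(q)}{\varphi(q)^4}\sum_{\substack{1\le a\le q\\ (a,q)=1}} C_2(q,a)\,C_3(q,a)^2\,e\!\left(\frac{-an}{q}\right),$$ with $\mu$ the Möbius function and $\varphi$ Euler's function. *)

theory Defs
  imports "HOL-Analysis.Analysis" "HOL-Number_Theory.Number_Theory" "HOL-Computational_Algebra.Squarefree"
begin

definition ee :: "real \<Rightarrow> complex" where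
  "ee x = exp (2 * of_real pi * \<i> * of_real x)"

definition moebius :: "nat \<Rightarrow> int" where
  "moebius q = (if squarefree q then (-1) ^ card (prime_factors q) else 0)"

definition Csum :: "nat \<Rightarrow> nat \<Rightarrow> int \<Rightarrow> complex" where
  "Csum i q a = (\<Sum>m \<in> {m \<in> {1..q}. coprime m q}. ee (of_int a * of_nat m ^ i / of_nat q))"

definition Aterm :: "int \<Rightarrow> nat \<Rightarrow> complex" where
  "Aterm n q = of_int (moebius q) / of_nat (totient q) ^ 4 *
     (\<Sum>a \<in> {a \<in> {1..q}. coprime a q}.
        Csum 2 q (int a) * Csum 3 q (int a) ^ 2 * ee (- (of_nat a * of_int n) / of_nat q))"

end

theory Submission
  imports Defs
begin


lemma ee_add: "ee (x + y) = ee x * ee y"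
  unfolding ee_def by (simp add: distrib_left exp_add)

lemma ee_int: "ee (of_int k) = 1"
proof -
  have "2 * of_real pi * \<i> * of_real (of_int k) = (2 * (of_int k::complex) * pi) * \<i>"
    by simp
  then show ?thesis unfolding ee_def using exp_integer_2pi[of "of_int k"] by (simp add: mult_ac)
qed

lemma ee_0 [simp]: "ee 0 = 1"
  using ee_int[of 0] by simp

lemma ee_eq_1_iff: "ee x = 1 \<longleftrightarrow> x \<in> \<int>"
proof
  assume "ee x = 1"
  then obtain m :: int where "Im (2 * of_real pi * \<i> * of_real x) = of_int (2*m) * pi"
    unfolding ee_def exp_eq_1 by blast
  then have "2 * pi * x = 2 * m * pi" by simp
  then have "x = of_int m" by simp
  then show "x \<in> \<int>" by simp
next
  assume "x \<in> \<int>" then obtain k where "x = of_int k" by (auto elim: Ints_cases)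
  then show "ee x = 1" by (simp add: ee_int)
qed

lemma cnj_ee: "cnj (ee x) = ee (- x)"
  unfolding ee_def by (simp add: exp_cnj)

lemma norm_ee: "norm (ee x) = 1"
  unfolding ee_def by (simp add: norm_exp)

lemma ee_mult_cnj: "ee x * cnj (ee x) = 1"
  by (simp add: cnj_ee ee_add[symmetric])

definition EE :: "nat \<Rightarrow> int \<Rightarrow> complex" where
  "EE p x = ee (of_int x / of_nat p)"

lemma EE_add: "EE p (x + y) = EE p x * EE p y"
  unfolding EE_def by (simp add: add_divide_distrib ee_add)

lemma EE_0 [simp]: "EE p 0 = 1"
  unfolding EE_def using ee_int[of 0] by simp

lemma EE_mult_p: "p > 0 \<Longrightarrow> EE p (int p * k) = 1"
  unfolding EE_def by (simp add: ee_int)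

lemma EE_dvd: "p > 0 \<Longrightarrow> int p dvd x \<Longrightarrow> EE p x = 1"
  by (auto simp: EE_mult_p)

lemma EE_cong: assumes "p > 0" "[x = y] (mod int p)" shows "EE p x = EE p y"
proof -
  from assms(2) obtain k where "x = y + int p * k"
    by (metis cong_iff_lin cong_sym)
  then show ?thesis using assms(1) by (simp add: EE_add EE_mult_p)
qed

lemma EE_mod: "p > 0 \<Longrightarrow> EE p (x mod int p) = EE p x"
  by (rule EE_cong) (auto simp: cong_def)

lemma cnj_EE: "cnj (EE p x) = EE p (- x)"
  unfolding EE_def by (simp add: cnj_ee)

lemma norm_EE [simp]: "norm (EE p x) = 1"
  unfolding EE_def by (simp add: norm_ee)

lemma EE_eq_1_iff: "p > 0 \<Longrightarrow> EE p x = 1 \<longleftrightarrow> int p dvd x"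
proof
  assume p: "p > 0" and "EE p x = 1"
  then have "of_int x / of_nat p \<in> (\<int>::real set)" by (simp add: EE_def ee_eq_1_iff)
  then obtain k where "of_int x / of_nat p = (of_int k :: real)" by (auto elim: Ints_cases)
  then have "of_int x = (of_int (int p * k) :: real)" using p by (simp add: field_simps)
  then have "x = int p * k" by linarith
  then show "int p dvd x" by simp
qed (auto simp: EE_dvd)

lemma EE_power: "EE p x ^ k = EE p (int k * x)"
  by (induction k) (auto simp: EE_add distrib_right)

lemma sum_EE_range: assumes "p > 0"
  shows "(\<Sum>x<p. EE p (b * int x)) = (if int p dvd b then of_nat p else 0)"
proof (cases "int p dvd b")
  case True then show ?thesis using assms by (simp add: EE_dvd)
next
  case False
  have w: "EE p b \<noteq> 1" using False assms EE_eq_1_iff by blast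
  have "(\<Sum>x<p. EE p (b * int x)) = (\<Sum>x<p. EE p b ^ x)"
    by (simp add: EE_power mult.commute)
  also have "\<dots> = (1 - EE p b ^ p) / (1 - EE p b)" using w by (simp add: sum_gp_strict)
  also have "EE p b ^ p = 1" using assms by (simp add: EE_power EE_mult_p)
  finally show ?thesis using False by simp
qed


lemma sum_periodic:
  fixes F :: "nat \<Rightarrow> 'a::comm_semiring_1"
  assumes per: "\<And>s. F (s + M) = F s"
  shows "(\<Sum>s<k*M. F s) = of_nat k * (\<Sum>s<M. F s)"
proof (induction k)
  case 0 then show ?case by simp
next
  case (Suc k)
  have perk: "F (s + k*M) = F s" for s
  proof (induction k)
    case (Suc k)
    have "s + Suc k * M = (s + k*M) + M" by simp
    then show ?case using Suc per by metis
  qed simp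
  have "(\<Sum>s<Suc k*M. F s) = (\<Sum>s<k*M. F s) + (\<Sum>s\<in>{k*M..<M + k*M}. F s)"
    by (simp add: lessThan_atLeast0 sum.atLeastLessThan_concat add.commute)
  also have "(\<Sum>s\<in>{k*M..<M + k*M}. F s) = (\<Sum>s\<in>{0..<M}. F (s + k*M))"
    using sum.shift_bounds_nat_ivl[of F 0 "k*M" M] by simp
  also have "\<dots> = (\<Sum>s<M. F s)" by (simp add: perk lessThan_atLeast0)
  finally show ?case using Suc by (simp add: algebra_simps)
qed

lemma sum_split3:
  fixes f :: "nat \<Rightarrow> 'a::comm_monoid_add"
  shows "(\<Sum>t<3*M. f t) = (\<Sum>s<M. f (3 * s) + f (3 * s + 1) + f (3 * s + 2))"
proof (induction M)
  case (Suc M)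
  have e: "3 * Suc M = Suc (Suc (Suc (3 * M)))" by simp
  show ?case unfolding e sum.lessThan_Suc using Suc.IH by (simp add: add_ac)
qed simp

lemma sum_split2:
  fixes f :: "nat \<Rightarrow> 'a::comm_monoid_add"
  shows "(\<Sum>t<2*M. f t) = (\<Sum>s<M. f (2 * s) + f (2 * s + 1))"
proof (induction M)
  case (Suc M)
  have e: "2 * Suc M = Suc (Suc (2 * M))" by simp
  show ?case unfolding e sum.lessThan_Suc using Suc.IH by (simp add: add_ac)
qed simp

lemma root_norm: fixes c :: complex assumes "c ^ L = 1" "L > 0" shows "norm c = 1"
proof -
  have "norm c ^ L = 1 ^ L" using assms by (metis norm_one norm_power power_one)
  then show ?thesis using assms(2) power_eq_imp_eq_base[of "norm c" L 1] by simp
qed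

lemma root_cnj_mult: fixes c :: complex assumes "c ^ L = 1" "L > 0" shows "cnj c * c = 1"
  using root_norm[OF assms] by (metis complex_norm_square mult.commute of_real_1 power_one)

lemma root_power_mod: fixes c :: complex assumes "c ^ L = 1" shows "c ^ (t mod L) = c ^ t"
proof -
  have "c ^ t = c ^ (L * (t div L) + t mod L)" by simp
  also have "\<dots> = c ^ (t mod L)" by (simp only: power_add power_mult assms power_one mult_1_left)
  finally show ?thesis by metis
qed

lemma sum_root: fixes c :: complex assumes "c ^ L = 1" "c \<noteq> 1"
  shows "(\<Sum>t<L. c ^ t) = 0"
  using assms by (simp add: sum_gp_strict)

locale prim =
  fixes p g :: nat
  assumes prime_p: "prime p" and odd_p: "odd p"
    and primroot: "residue_primroot p g"
begin

definition L where "L = p - 1"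
definition gam where "gam t = g ^ t mod p"
definition T :: "complex \<Rightarrow> int \<Rightarrow> complex" where
  "T c a = (\<Sum>t<L. c ^ t * EE p (a * int (gam t)))"
definition G where "G c = T c 1"

lemma p_gt1: "p > 1" using prime_p prime_gt_1_nat by blast
lemma p_pos: "p > 0" using p_gt1 by simp
lemma L_pos: "L > 0" using p_gt1 by (simp add: L_def)
lemma L_even: "even L" using odd_p p_gt1 by (simp add: L_def)
lemma tot: "totatives p = {0<..<p}" using prime_p by (simp add: totatives_prime)
lemma totient_p: "totient p = L" using prime_p by (simp add: totient_prime L_def)

lemma gam_bij: "bij_betw gam {..<L} {0<..<p}"
  using residue_primroot_is_generator[OF p_gt1 primroot] tot totient_p
  unfolding gam_def by simp

lemma g_not_dvd: "\<not> p dvd g"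
proof
  assume "p dvd g"
  have "coprime p g" using primroot by (simp add: residue_primroot_def)
  then have "is_unit p" using coprime_common_divisor[OF _ dvd_refl \<open>p dvd g\<close>] by blast
  then show False using p_gt1 by simp
qed

lemma gam_range: "gam t \<in> {0<..<p}"
proof -
  have "\<not> p dvd g" by (rule g_not_dvd)
  then have "\<not> p dvd g ^ t" using prime_p prime_dvd_power by blast
  then show ?thesis using p_pos by (auto simp: gam_def dvd_eq_mod_eq_0)
qed


lemma gam_add: "gam (s + t) = (gam s * gam t) mod p"
  unfolding gam_def by (simp add: power_add mod_mult_eq)

lemma gam_L: "gam (t + L) = gam t"
proof -
  have "[g ^ L = 1] (mod p)" using fermat_theorem[OF prime_p g_not_dvd] by (simp add: L_def)
  then have "g ^ L mod p = 1" using p_gt1 by (simp add: cong_def)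
  then show ?thesis unfolding gam_def by (simp add: power_add mod_mult_eq[symmetric] mod_mult_right_eq[symmetric])
qed

lemma gam_mod: "gam (t mod L) = gam t"
proof -
  have *: "gam (r + L * k) = gam r" for r k
  proof (induction k)
    case (Suc k)
    have "r + L * Suc k = (r + L * k) + L" by simp
    then show ?case using Suc gam_L by metis
  qed simp
  have "t = t mod L + L * (t div L)" by simp
  then show ?thesis using *[of "t mod L" "t div L"] by metis
qed

lemma gam_mult_cong: "[int (gam s) * int (gam t) = int (gam (s + t))] (mod int p)"
  unfolding gam_add cong_def by (simp add: zmod_int of_nat_mult)

lemma sum_units_gam: "(\<Sum>u\<in>{0<..<p}. F u) = (\<Sum>t<L. F (gam t))"
  using sum.reindex_bij_betw[OF gam_bij, of F] by simp

lemma sum_EE_units: "(\<Sum>u\<in>{0<..<p}. EE p (b * int u)) = (if int p dvd b then of_nat L else -1)"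
proof -
  have "{..<p} = insert 0 {0<..<p}" using p_pos by auto
  then have "(\<Sum>x<p. EE p (b * int x)) = 1 + (\<Sum>u\<in>{0<..<p}. EE p (b * int u))"
    by simp
  then have "(\<Sum>u\<in>{0<..<p}. EE p (b * int u)) = (\<Sum>x<p. EE p (b * int x)) - 1"
    by (simp add: algebra_simps)
  then show ?thesis using sum_EE_range[OF p_pos, of b] p_gt1
    by (auto simp: L_def of_nat_diff)
qed

lemma T_cong: "[a = a'] (mod int p) \<Longrightarrow> T c a = T c a'"
  unfolding T_def by (intro sum.cong refl arg_cong2[where f="(*)"] EE_cong p_pos cong_mult) auto

lemma shift_sum: "(\<Sum>t<L. F ((t + r) mod L)) = (\<Sum>t<L. F t)"
proof -
  have inj: "inj_on (\<lambda>t. (t + r) mod L) {..<L}"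
  proof
    fix s t assume "s \<in> {..<L}" "t \<in> {..<L}" "(s + r) mod L = (t + r) mod L"
    then have "[s = t] (mod L)" by (metis cong_add_rcancel_nat cong_def)
    then show "s = t" using \<open>s \<in> _\<close> \<open>t \<in> _\<close> by (simp add: cong_def)
  qed
  have "(\<lambda>t. (t + r) mod L) ` {..<L} = {..<L}"
    by (rule endo_inj_surj) (use inj L_pos in auto)
  then show ?thesis using sum.reindex[OF inj, of F] by simp
qed

lemma T_gam: assumes "c ^ L = 1" shows "c ^ r * T c (int (gam r)) = G c"
proof -
  have "c ^ r * T c (int (gam r)) = (\<Sum>t<L. c ^ (t + r) * EE p (int (gam (t + r))))"
    unfolding T_def sum_distrib_left
  proof (intro sum.cong refl)
    fix t
    have "EE p (int (gam r) * int (gam t)) = EE p (int (gam (t + r)))"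
      using gam_mult_cong[of r t] by (intro EE_cong p_pos) (simp add: add.commute)
    then show "c ^ r * (c ^ t * EE p (int (gam r) * int (gam t))) = c ^ (t + r) * EE p (int (gam (t + r)))"
      by (simp add: power_add mult_ac)
  qed
  also have "\<dots> = (\<Sum>t<L. c ^ ((t + r) mod L) * EE p (int (gam ((t + r) mod L))))"
    by (simp add: root_power_mod[OF assms] gam_mod)
  also have "\<dots> = (\<Sum>t<L. c ^ t * EE p (int (gam t)))"
    by (rule shift_sum[of "\<lambda>t. c ^ t * EE p (int (gam t))"])
  finally show ?thesis by (simp add: G_def T_def)
qed

lemma T_gam': assumes "c ^ L = 1" shows "T c (int (gam r)) = cnj c ^ r * G c"
proof -
  have "cnj c ^ r * G c = (cnj c * c) ^ r * T c (int (gam r))"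
    using T_gam[OF assms, of r] by (simp add: power_mult_distrib mult_ac)
  then show ?thesis using root_cnj_mult[OF assms L_pos] by simp
qed

lemma unit_gam: assumes "\<not> int p dvd a" obtains r where "r < L" "[a = int (gam r)] (mod int p)"
proof -
  define u where "u = nat (a mod int p)"
  have m: "0 \<le> a mod int p" "a mod int p < int p" using p_pos by simp_all
  have nz: "a mod int p \<noteq> 0" using assms by (simp add: dvd_eq_mod_eq_0)
  have iu: "int u = a mod int p" using m by (simp add: u_def)
  have "u \<in> {0<..<p}" using m nz iu by auto
  then have "u \<in> gam ` {..<L}" using gam_bij by (simp add: bij_betw_def)
  then obtain r where "r < L" "gam r = u" by auto
  moreover have "[a = int u] (mod int p)" using p_pos unfolding u_def cong_def by simp
  ultimately show ?thesis using that by blast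
qed

lemma G_one: "G 1 = -1"
proof -
  have "G 1 = (\<Sum>t<L. EE p (1 * int (gam t)))" by (simp add: G_def T_def)
  also have "\<dots> = (\<Sum>u\<in>{0<..<p}. EE p (1 * int u))" by (rule sum_units_gam[symmetric])
  also have "\<dots> = -1" using p_gt1 sum_EE_units[of 1] by simp
  finally show ?thesis .
qed

lemma gam_inj_cong: assumes "s < L" "t < L" shows "int p dvd (int (gam t) - int (gam s)) \<longleftrightarrow> t = s"
proof
  assume "int p dvd (int (gam t) - int (gam s))"
  then have "[int (gam t) = int (gam s)] (mod int p)" by (simp add: cong_iff_dvd_diff)
  then have "gam t mod p = gam s mod p" by (simp add: cong_def zmod_int[symmetric])
  then have "gam t = gam s" using gam_range[of t] gam_range[of s] by simp
  then show "t = s" using gam_bij assms by (auto simp: bij_betw_def inj_on_def)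
qed simp

lemma G_norm2: assumes "c ^ L = 1" "c \<noteq> 1" shows "G c * cnj (G c) = of_nat p"
proof -
  have cc: "cnj c * c = 1" using root_cnj_mult[OF assms(1) L_pos] .
  have cc': "c * cnj c = 1" using cc by (simp add: mult.commute)
  define H where "H a = T c a * cnj (T c a)" for a
  have H_gam: "H (int (gam r)) = G c * cnj (G c)" for r
    unfolding H_def T_gam'[OF assms(1)]
    by (simp add: power_mult_distrib[symmetric] cc cc' mult_ac)
  have "(\<Sum>u\<in>{0<..<p}. H (int u)) = (\<Sum>r<L. H (int (gam r)))" by (rule sum_units_gam)
  also have "\<dots> = of_nat L * (G c * cnj (G c))" by (simp add: H_gam)
  finally have 1: "(\<Sum>u\<in>{0<..<p}. H (int u)) = of_nat L * (G c * cnj (G c))" .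
  have "(\<Sum>u\<in>{0<..<p}. H (int u)) = (\<Sum>u\<in>{0<..<p}. \<Sum>t<L. \<Sum>s<L.
          (c ^ t * cnj c ^ s) * EE p ((int (gam t) - int (gam s)) * int u))"
    unfolding H_def T_def cnj_sum sum_product
    by (intro sum.cong refl) (simp add: cnj_EE EE_add[symmetric] algebra_simps)
  also have "\<dots> = (\<Sum>t<L. \<Sum>s<L. (c ^ t * cnj c ^ s) *
                 (\<Sum>u\<in>{0<..<p}. EE p ((int (gam t) - int (gam s)) * int u)))"
    by (simp add: sum_distrib_left sum.swap[of _ "{0<..<p}"])
  also have "\<dots> = (\<Sum>t<L. \<Sum>s<L. (c ^ t * cnj c ^ s) * ((if t = s then of_nat p else 0) - 1))"
    by (intro sum.cong refl) (simp add: sum_EE_units gam_inj_cong L_def of_nat_diff p_gt1[THEN less_imp_le])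
  also have "\<dots> = (\<Sum>t<L. (\<Sum>s<L. (if t = s then of_nat p * (c ^ t * cnj c ^ t) else 0)) - c ^ t * (\<Sum>s<L. cnj c ^ s))"
    unfolding sum_distrib_left sum_subtractf[symmetric]
    by (intro sum.cong refl) (auto simp: algebra_simps)
  also have "\<dots> = (\<Sum>t<L. of_nat p * (c ^ t * cnj c ^ t) - c ^ t * (\<Sum>s<L. cnj c ^ s))"
    by (intro sum.cong refl) (simp add: sum.delta)
  also have "(\<Sum>s<L. cnj c ^ s) = 0"
    using sum_root[OF assms] cnj_sum[of "\<lambda>s. c ^ s" "{..<L}"] by simp
  also have "(\<Sum>t<L. of_nat p * (c ^ t * cnj c ^ t) - c ^ t * 0) = of_nat p * of_nat L"
    by (simp add: power_mult_distrib[symmetric] cc')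
  finally have "of_nat L * (G c * cnj (G c)) = of_nat p * of_nat L" using 1 by simp
  then have "of_nat L * (G c * cnj (G c)) = of_nat L * of_nat p" by (metis mult.commute)
  then show ?thesis using L_pos by simp
qed

lemma G_norm: assumes "c ^ L = 1" shows "norm (G c) = (if c = 1 then 1 else sqrt p)"
proof (cases "c = 1")
  case True then show ?thesis by (simp add: G_one)
next
  case False
  have "complex_of_real (norm (G c) ^ 2) = of_nat p"
    using G_norm2[OF assms False] complex_norm_square[of "G c"] by simp
  then have "norm (G c) ^ 2 = real p" by (metis of_real_eq_iff of_real_of_nat_eq)
  then show ?thesis using False real_sqrt_unique[of "norm (G c)" p] by simp
qed

end


definition om :: complex where "om = ee (1/3)"

lemma ee_power: "ee x ^ k = ee (of_nat k * x)"
  by (induction k) (auto simp: ee_add distrib_right)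

lemma om3: "om ^ 3 = 1"
  unfolding om_def ee_power using ee_int[of 1] by simp

lemma om_ne1: "om \<noteq> 1"
proof
  assume "om = 1"
  then have "(1/3::real) \<in> \<int>" unfolding om_def ee_eq_1_iff .
  then obtain k :: int where "1/3 = (of_int k :: real)" by (auto elim: Ints_cases)
  then have "1 = 3 * (of_int k :: real)" by simp
  then have "(1::int) = 3 * k" by linarith
  then show False by presburger
qed

lemma om_sum: "1 + om + om ^ 2 = 0"
proof -
  have "(om - 1) * (1 + om + om ^ 2) = om ^ 3 - 1" by (simp add: algebra_simps power2_eq_square power3_eq_cube)
  also have "\<dots> = 0" by (simp add: om3)
  finally show ?thesis using om_ne1 by simp
qed

lemma om_pow_mod: "om ^ j = om ^ (j mod 3)"
  using root_power_mod[OF om3] by simp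

lemma om2_ne1: "om ^ 2 \<noteq> 1"
proof
  assume "om ^ 2 = 1"
  then have "om ^ 3 = om" by (simp add: power3_eq_cube power2_eq_square)
  then show False using om3 om_ne1 by simp
qed

lemma om_pow_eq_1: "om ^ j = 1 \<longleftrightarrow> 3 dvd j"
proof -
  have "j mod 3 < 3" by simp
  then have "j mod 3 = 0 \<or> j mod 3 = 1 \<or> j mod 3 = 2" by linarith
  then show ?thesis using om_ne1 om2_ne1
    by (subst om_pow_mod) (auto simp: dvd_eq_mod_eq_0)
qed

lemma om_pow_ne_neg1: "om ^ j \<noteq> -1"
proof
  assume "om ^ j = -1"
  then have "(om ^ 3) ^ j = (-1) ^ 3" by (metis power_mult mult.commute)
  then show False using om3 by simp
qed

lemma neg1_pow: "(-1::complex) ^ i = (if even i then 1 else -1)"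
  by simp

lemma triv_iff: "(-1::complex) ^ i * om ^ j * om ^ k = 1 \<longleftrightarrow> even i \<and> 3 dvd (j + k)"
proof -
  have "(-1::complex) ^ i * om ^ j * om ^ k = (if even i then 1 else -1) * om ^ (j + k)"
    by (simp add: power_add)
  note eq = this
  show ?thesis
  proof (cases "even i")
    case True then show ?thesis using eq om_pow_eq_1[of "j+k"] by simp
  next
    case False
    have "- (om ^ (j + k)) \<noteq> (1::complex)" using om_pow_ne_neg1[of "j+k"] by (metis minus_minus)
    then show ?thesis using eq False by simp
  qed
qed

context prim
begin

definition wt :: "complex \<Rightarrow> real" where "wt c = (if c = 1 then 1 else sqrt p)"
definition V :: "int \<Rightarrow> complex \<Rightarrow> real" where
  "V n d = (if int p dvd n then (if d = 1 then real L else 0) else wt d)"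

lemma root_cnj: assumes "c ^ L = 1" shows "cnj c ^ L = 1"
  using assms by (metis complex_cnj_one complex_cnj_power)

lemma norm_G: "c ^ L = 1 \<Longrightarrow> norm (G c) = wt c"
  using G_norm by (simp add: wt_def)

lemma T_neg_norm: assumes d: "d ^ L = 1" shows "norm (T d (-n)) \<le> V n d"
proof (cases "int p dvd n")
  case True
  have "T d (-n) = (\<Sum>t<L. d ^ t)"
    unfolding T_def using True by (intro sum.cong refl) (simp add: EE_dvd p_pos)
  then show ?thesis using True sum_root[OF d] by (simp add: V_def)
next
  case False
  then have "\<not> int p dvd (-n)" by simp
  then obtain r where r: "r < L" "[- n = int (gam r)] (mod int p)" by (rule unit_gam)
  have "T d (-n) = cnj d ^ r * G d" using T_cong[OF r(2)] T_gam'[OF d] by simp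
  then have "norm (T d (-n)) = norm (G d)"
    using root_norm[OF d L_pos] by (simp add: norm_mult norm_power)
  then show ?thesis using False norm_G[OF d] by (simp add: V_def)
qed

lemma triple_eq:
  assumes c: "c1 ^ L = 1" "c2 ^ L = 1" "c3 ^ L = 1"
  shows "(\<Sum>a\<in>{0<..<p}. T c1 (int a) * T c2 (int a) * T c3 (int a) * EE p (-(int a * n)))
     = G c1 * G c2 * G c3 * T (cnj (c1 * c2 * c3)) (-n)"
proof -
  have "(\<Sum>a\<in>{0<..<p}. T c1 (int a) * T c2 (int a) * T c3 (int a) * EE p (-(int a * n)))
      = (\<Sum>r<L. T c1 (int (gam r)) * T c2 (int (gam r)) * T c3 (int (gam r)) * EE p (-(int (gam r) * n)))"
    by (rule sum_units_gam)
  also have "\<dots> = (\<Sum>r<L. G c1 * G c2 * G c3 * (cnj (c1 * c2 * c3) ^ r * EE p (- n * int (gam r))))"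
    by (intro sum.cong refl) (simp add: T_gam'[OF c(1)] T_gam'[OF c(2)] T_gam'[OF c(3)] power_mult_distrib mult_ac)
  also have "\<dots> = G c1 * G c2 * G c3 * T (cnj (c1 * c2 * c3)) (-n)"
    by (simp add: T_def sum_distrib_left)
  finally show ?thesis .
qed

lemma triple_bound:
  assumes c: "c1 ^ L = 1" "c2 ^ L = 1" "c3 ^ L = 1"
  shows "norm (\<Sum>a\<in>{0<..<p}. T c1 (int a) * T c2 (int a) * T c3 (int a) * EE p (-(int a * n)))
     \<le> wt c1 * wt c2 * wt c3 * V n (c1 * c2 * c3)"
proof -
  have d: "cnj (c1 * c2 * c3) ^ L = 1" using c by (intro root_cnj) (simp add: power_mult_distrib)
  have e: "(cnj (c1*c2*c3) = 1) = (c1*c2*c3 = 1)" by (rule complex_cnj_one_iff)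
  have "V n (cnj (c1 * c2 * c3)) = V n (c1 * c2 * c3)" unfolding V_def wt_def e by (rule refl)
  then show ?thesis unfolding triple_eq[OF c] using T_neg_norm[OF d, of n]
    by (simp add: norm_mult norm_G[OF c(1)] norm_G[OF c(2)] norm_G[OF c(3)] mult_left_mono wt_def)
qed

end


lemma expand3:
  fixes x y :: "'i \<Rightarrow> complex"
  shows "(\<Sum>i\<in>A. x i) * (\<Sum>j\<in>B. y j)^2 * e = (\<Sum>j\<in>B. \<Sum>k\<in>B. \<Sum>i\<in>A. x i * y j * y k * e)"
  by (simp add: power2_eq_square sum_distrib_left sum_distrib_right mult_ac)

lemma bound3:
  fixes f :: "'a \<Rightarrow> 'i \<Rightarrow> 'i \<Rightarrow> 'i \<Rightarrow> complex"
  assumes "\<And>i j k. i \<in> A \<Longrightarrow> j \<in> B \<Longrightarrow> k \<in> C \<Longrightarrow> norm (\<Sum>a\<in>U. f a i j k) \<le> W i j k"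
  shows "norm (\<Sum>a\<in>U. \<Sum>i\<in>A. \<Sum>j\<in>B. \<Sum>k\<in>C. f a i j k) \<le> (\<Sum>i\<in>A. \<Sum>j\<in>B. \<Sum>k\<in>C. W i j k)"
proof -
  have "(\<Sum>a\<in>U. \<Sum>i\<in>A. \<Sum>j\<in>B. \<Sum>k\<in>C. f a i j k) = (\<Sum>i\<in>A. \<Sum>j\<in>B. \<Sum>k\<in>C. \<Sum>a\<in>U. f a i j k)"
    by (subst sum.swap, rule sum.cong, rule refl, subst sum.swap, rule sum.cong, rule refl, subst sum.swap, rule refl)
  also have "norm \<dots> \<le> (\<Sum>i\<in>A. norm (\<Sum>j\<in>B. \<Sum>k\<in>C. \<Sum>a\<in>U. f a i j k))" by (rule norm_sum)
  also have "\<dots> \<le> (\<Sum>i\<in>A. \<Sum>j\<in>B. norm (\<Sum>k\<in>C. \<Sum>a\<in>U. f a i j k))" by (intro sum_mono norm_sum)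
  also have "\<dots> \<le> (\<Sum>i\<in>A. \<Sum>j\<in>B. \<Sum>k\<in>C. norm (\<Sum>a\<in>U. f a i j k))" by (intro sum_mono norm_sum)
  also have "\<dots> \<le> (\<Sum>i\<in>A. \<Sum>j\<in>B. \<Sum>k\<in>C. W i j k)" by (intro sum_mono assms)
  finally show ?thesis .
qed

context prim
begin

lemma wt_neg: "wt ((-1) ^ i) = (if even i then 1 else sqrt p)"
  by (simp add: wt_def)

lemma wt_om: "wt (om ^ j) = (if 3 dvd j then 1 else sqrt p)"
  by (simp add: wt_def om_pow_eq_1)

lemma V_triple: "V n ((-1) ^ i * om ^ j * om ^ k) =
  (if int p dvd n then (if even i \<and> 3 dvd (j + k) then real L else 0)
   else (if even i \<and> 3 dvd (j + k) then 1 else sqrt p))"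
  unfolding V_def wt_def triv_iff by simp

lemma lt2: "{..<2::nat} = {0,1}" by auto
lemma lt3: "{..<3::nat} = {0,1,2}" by auto
lemma lt1: "{..<1::nat} = {0}" by auto

lemma d3: "(3::nat) dvd 0" "\<not> (3::nat) dvd 1" "\<not> (3::nat) dvd 2" "(3::nat) dvd 3" "\<not> (3::nat) dvd 4"
  "\<not> (3::nat) dvd Suc 0" "\<not> (3::nat) dvd Suc (Suc 0)" "(3::nat) dvd Suc (Suc (Suc 0))" "\<not> (3::nat) dvd Suc (Suc (Suc (Suc 0)))"
  by presburger+

lemma Wsum3_abs: fixes s l :: real and b :: bool
  shows "(\<Sum>j\<in>{0,1,2::nat}. \<Sum>k\<in>{0,1,2::nat}. \<Sum>i\<in>{0,1::nat}. (if even i then 1 else s) * (if 3 dvd j then 1 else s) * (if 3 dvd k then 1 else s) *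
     (if b then (if even i \<and> 3 dvd (j+k) then l else 0) else (if even i \<and> 3 dvd (j+k) then 1 else s)))
   = (if b then 2 * l * s ^ 2 + l else 4 * s ^ 4 + 6 * s ^ 3 + 7 * s ^ 2 + 1)"
  by (simp add: d3 algebra_simps power2_eq_square power3_eq_cube power4_eq_xxxx)

lemma Wsum1_abs: fixes s l :: real and b :: bool
  shows "(\<Sum>j\<in>{0::nat}. \<Sum>k\<in>{0::nat}. \<Sum>i\<in>{0,1::nat}. (if even i then 1 else s) * (if 3 dvd j then 1 else s) * (if 3 dvd k then 1 else s) *
     (if b then (if even i \<and> 3 dvd (j+k) then l else 0) else (if even i \<and> 3 dvd (j+k) then 1 else s)))
   = (if b then l else s ^ 2 + 1)"
  by (simp add: algebra_simps power2_eq_square)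

lemma Wsum3: "(\<Sum>j<3. \<Sum>k<3. \<Sum>i<2. wt ((-1) ^ i) * wt (om ^ j) * wt (om ^ k) * V n ((-1) ^ i * om ^ j * om ^ k))
   = (if int p dvd n then 2 * real L * sqrt p ^ 2 + real L else 4 * sqrt p ^ 4 + 6 * sqrt p ^ 3 + 7 * sqrt p ^ 2 + 1)"
  unfolding wt_neg wt_om V_triple lt2 lt3 by (rule Wsum3_abs)

lemma Wsum1: "(\<Sum>j<1. \<Sum>k<1. \<Sum>i<2. wt ((-1) ^ i) * wt (om ^ j) * wt (om ^ k) * V n ((-1) ^ i * om ^ j * om ^ k))
   = (if int p dvd n then real L else sqrt p ^ 2 + 1)"
  unfolding wt_neg wt_om V_triple lt2 lt1 by (rule Wsum1_abs)

lemma units_set: "{m \<in> {1..p}. coprime m p} = {0<..<p}"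
  by (auto simp: tot[symmetric] in_totatives_iff)

lemma Csum_EE: "Csum i p a = (\<Sum>m\<in>{0<..<p}. EE p (a * int m ^ i))"
  unfolding Csum_def units_set by (intro sum.cong refl) (simp add: EE_def)

lemma Csum_gam: "Csum i p a = (\<Sum>s<L. EE p (a * int (gam (i * s))))"
proof -
  have "Csum i p a = (\<Sum>s<L. EE p (a * int (gam s) ^ i))"
    unfolding Csum_EE by (rule sum_units_gam)
  also have "\<dots> = (\<Sum>s<L. EE p (a * int (gam (i * s))))"
  proof (intro sum.cong refl EE_cong p_pos cong_mult cong_refl)
    fix s
    have e: "(g ^ s) ^ i = (g ^ i) ^ s" by (metis power_mult mult.commute)
    have "[gam s ^ i = gam (i * s)] (mod p)"
      by (simp add: gam_def cong_def power_mod power_mult e)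
    then show "[int (gam s) ^ i = int (gam (i * s))] (mod int p)"
      by (metis cong_int_iff of_nat_power)
  qed
  finally show ?thesis .
qed

lemma Csum2: "Csum 2 p a = (\<Sum>i<2. T ((-1) ^ i) a)"
proof -
  define M where "M = L div 2"
  have LM: "L = 2 * M" using L_even by (simp add: M_def)
  define X where "X t = EE p (a * int (gam t))" for t
  have per: "X (2 * (s + M)) = X (2 * s)" for s
  proof -
    have "2 * (s + M) = 2 * s + L" by (simp add: LM)
    then show ?thesis by (simp add: X_def gam_L)
  qed
  have "Csum 2 p a = (\<Sum>s<2*M. X (2 * s))" by (simp add: Csum_gam X_def LM)
  also have "\<dots> = 2 * (\<Sum>s<M. X (2 * s))" using sum_periodic[of "\<lambda>s. X (2 * s)" M 2] per by simp
  finally have A: "Csum 2 p a = 2 * (\<Sum>s<M. X (2 * s))" .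
  have "(\<Sum>i<2. T ((-1) ^ i) a) = (\<Sum>t<2*M. (1 + (-1) ^ t) * X t)"
    by (simp add: lt2 T_def X_def LM sum.distrib[symmetric] algebra_simps)
  also have "\<dots> = (\<Sum>s<M. 2 * X (2 * s))"
    by (subst sum_split2) simp
  finally show ?thesis using A by (simp add: sum_distrib_left)
qed

lemma om_3k: "om ^ (3 * k + r) = om ^ r"
proof -
  have "om ^ (3 * k + r) = (om ^ 3) ^ k * om ^ r" by (simp add: power_add power_mult)
  then show ?thesis by (simp add: om3)
qed

lemma om_3s: "om ^ (3 * s) = 1" "om ^ (3 * s + 1) = om" "om ^ (3 * s + 2) = om ^ 2"
  "(om ^ 2) ^ (3 * s) = 1" "(om ^ 2) ^ (3 * s + 1) = om ^ 2" "(om ^ 2) ^ (3 * s + 2) = om"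
proof -
  show "om ^ (3 * s) = 1" using om_3k[of s 0] by simp
  show "om ^ (3 * s + 1) = om" using om_3k[of s 1] by simp
  show "om ^ (3 * s + 2) = om ^ 2" using om_3k[of s 2] by simp
  have c1: "(om ^ 2) ^ (3 * s) = om ^ (2 * (3 * s))" by (simp only: power_mult)
  have ee: "2 * (3 * s) = 3 * (2 * s) + 0" by simp
  have "(om ^ 2) ^ (3 * s) = om ^ (3 * (2 * s) + 0)" by (simp only: c1 ee)
  then show "(om ^ 2) ^ (3 * s) = 1" using om_3k[of "2 * s" 0] by simp
  have c1: "(om ^ 2) ^ (3 * s + 1) = om ^ (2 * (3 * s + 1))" by (simp only: power_mult)
  have ee: "2 * (3 * s + 1) = 3 * (2 * s) + 2" by simp
  have "(om ^ 2) ^ (3 * s + 1) = om ^ (3 * (2 * s) + 2)" by (simp only: c1 ee)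
  then show "(om ^ 2) ^ (3 * s + 1) = om ^ 2" using om_3k[of "2 * s" 2] by simp
  have c1: "(om ^ 2) ^ (3 * s + 2) = om ^ (2 * (3 * s + 2))" by (simp only: power_mult)
  have ee: "2 * (3 * s + 2) = 3 * (2 * s + 1) + 1" by simp
  have "(om ^ 2) ^ (3 * s + 2) = om ^ (3 * (2 * s + 1) + 1)" by (simp only: c1 ee)
  then show "(om ^ 2) ^ (3 * s + 2) = om" using om_3k[of "2 * s + 1" 1] by simp
qed

lemma Csum3_a: assumes "3 dvd L" shows "Csum 3 p a = (\<Sum>j<3. T (om ^ j) a)"
proof -
  define M where "M = L div 3"
  have LM: "L = 3 * M" using assms by (simp add: M_def)
  define X where "X t = EE p (a * int (gam t))" for t
  have per: "X (3 * (s + M)) = X (3 * s)" for s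
  proof -
    have "3 * (s + M) = 3 * s + L" by (simp add: LM)
    then show ?thesis by (simp add: X_def gam_L)
  qed
  have "Csum 3 p a = (\<Sum>s<3*M. X (3 * s))" by (simp add: Csum_gam X_def LM)
  also have "\<dots> = 3 * (\<Sum>s<M. X (3 * s))" using sum_periodic[of "\<lambda>s. X (3 * s)" M 3] per by simp
  finally have A: "Csum 3 p a = 3 * (\<Sum>s<M. X (3 * s))" .
  have "(\<Sum>j<3. T (om ^ j) a) = (\<Sum>t<3*M. (1 + om ^ t + (om ^ 2) ^ t) * X t)"
    by (simp add: lt3 T_def X_def LM sum.distrib[symmetric] algebra_simps power_mult[symmetric])
  also have "\<dots> = (\<Sum>s<M. 3 * X (3 * s))"
  proof (subst sum_split3, intro sum.cong refl)
    fix s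
    have "1 + om + om ^ 2 = 0" "1 + om ^ 2 + om = 0" using om_sum by (simp_all add: algebra_simps)
    then show "(1 + om ^ (3 * s) + (om ^ 2) ^ (3 * s)) * X (3 * s) +
          (1 + om ^ (3 * s + 1) + (om ^ 2) ^ (3 * s + 1)) * X (3 * s + 1) +
          (1 + om ^ (3 * s + 2) + (om ^ 2) ^ (3 * s + 2)) * X (3 * s + 2) = 3 * X (3 * s)"
      by (simp only: om_3s) simp
  qed
  finally show ?thesis using A by (simp add: sum_distrib_left)
qed

lemma Csum3_b: assumes "\<not> 3 dvd L" shows "Csum 3 p a = (\<Sum>j<1. T (om ^ j) a)"
proof -
  define X where "X t = EE p (a * int (gam t))" for t
  have cop: "coprime 3 L" using assms by (intro prime_imp_coprime) auto
  have inj: "inj_on (\<lambda>s. (3 * s) mod L) {..<L}"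
  proof
    fix s t assume "s \<in> {..<L}" "t \<in> {..<L}" "(3 * s) mod L = (3 * t) mod L"
    then have "[3 * s = 3 * t] (mod L)" by (simp add: cong_def)
    then have "[s = t] (mod L)" using cong_mult_lcancel_nat[OF cop] by blast
    then show "s = t" using \<open>s \<in> _\<close> \<open>t \<in> _\<close> by (simp add: cong_def)
  qed
  have img: "(\<lambda>s. (3 * s) mod L) ` {..<L} = {..<L}"
    by (rule endo_inj_surj) (use inj L_pos in auto)
  have "Csum 3 p a = (\<Sum>s<L. X ((3 * s) mod L))" by (simp add: Csum_gam X_def gam_mod)
  also have "\<dots> = (\<Sum>t<L. X t)" using sum.reindex[OF inj, of X] img by simp
  finally show ?thesis by (simp add: T_def X_def)
qed

end


context prim
begin

definition Ssum :: "int \<Rightarrow> complex" where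
  "Ssum n = (\<Sum>a\<in>{0<..<p}. Csum 2 p (int a) * Csum 3 p (int a) ^ 2 * EE p (-(int a * n)))"

lemma moebius_p: "moebius p = -1"
  using prime_p by (simp add: moebius_def squarefree_prime prime_prime_factors)

lemma Aterm_eq: "Aterm n p = - Ssum n / of_nat L ^ 4"
proof -
  have "Aterm n p = of_int (moebius p) / of_nat L ^ 4 * Ssum n"
    unfolding Aterm_def Ssum_def totient_p units_set
    by (intro arg_cong2[where f="(*)"] refl sum.cong) (simp_all add: EE_def)
  then show ?thesis by (simp add: moebius_p)
qed

lemma neg_root: "((-1::complex) ^ i) ^ L = 1"
proof -
  obtain M where "L = 2 * M" using L_even by blast
  then show ?thesis by (simp add: power_mult[symmetric] mult.commute[of i] power_mult)
qed

lemma om_root: "3 dvd L \<Longrightarrow> (om ^ j) ^ L = 1"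
proof -
  assume "3 dvd L"
  then obtain M where "L = 3 * M" by blast
  then show ?thesis by (simp add: power_mult[symmetric] mult.commute[of j] power_mult om3)
qed

lemma Ssum_bound3: assumes "3 dvd L"
  shows "norm (Ssum n) \<le> (if int p dvd n then 2 * real L * sqrt p ^ 2 + real L else 4 * sqrt p ^ 4 + 6 * sqrt p ^ 3 + 7 * sqrt p ^ 2 + 1)"
proof -
  have "Ssum n = (\<Sum>a\<in>{0<..<p}. \<Sum>j<3. \<Sum>k<3. \<Sum>i<2. T ((-1)^i) (int a) * T (om ^ j) (int a) * T (om ^ k) (int a) * EE p (-(int a * n)))"
    unfolding Ssum_def Csum2 Csum3_a[OF assms] by (intro sum.cong refl expand3)
  moreover have "norm (\<Sum>a\<in>{0<..<p}. \<Sum>j<3. \<Sum>k<3. \<Sum>i<2. T ((-1)^i) (int a) * T (om ^ j) (int a) * T (om ^ k) (int a) * EE p (-(int a * n))) \<le> (\<Sum>j<3. \<Sum>k<3. \<Sum>i<2. wt ((-1) ^ i) * wt (om ^ j) * wt (om ^ k) * V n ((-1) ^ i * om ^ j * om ^ k))"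
  proof (rule bound3[where f="\<lambda>a j k i. T ((-1)^i) (int a) * T (om ^ j) (int a) * T (om ^ k) (int a) * EE p (-(int a * n))"])
    fix i j k :: nat
    show "norm (\<Sum>a\<in>{0<..<p}. T ((-1)^i) (int a) * T (om ^ j) (int a) * T (om ^ k) (int a) * EE p (-(int a * n)))
      \<le> wt ((-1) ^ i) * wt (om ^ j) * wt (om ^ k) * V n ((-1) ^ i * om ^ j * om ^ k)"
      by (rule triple_bound[OF neg_root om_root[OF assms] om_root[OF assms]])
  qed
  ultimately show ?thesis unfolding Wsum3 by simp
qed

lemma Ssum_bound1: assumes "\<not> 3 dvd L"
  shows "norm (Ssum n) \<le> (if int p dvd n then real L else sqrt p ^ 2 + 1)"
proof -
  have r1: "(om ^ j) ^ L = 1" if "j < 1" for j using that by simp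
  have "Ssum n = (\<Sum>a\<in>{0<..<p}. \<Sum>j<1. \<Sum>k<1. \<Sum>i<2. T ((-1)^i) (int a) * T (om ^ j) (int a) * T (om ^ k) (int a) * EE p (-(int a * n)))"
    unfolding Ssum_def Csum2 Csum3_b[OF assms] by (intro sum.cong refl expand3)
  moreover have "norm (\<Sum>a\<in>{0<..<p}. \<Sum>j<1. \<Sum>k<1. \<Sum>i<2. T ((-1)^i) (int a) * T (om ^ j) (int a) * T (om ^ k) (int a) * EE p (-(int a * n))) \<le> (\<Sum>j<1. \<Sum>k<1. \<Sum>i<2. wt ((-1) ^ i) * wt (om ^ j) * wt (om ^ k) * V n ((-1) ^ i * om ^ j * om ^ k))"
  proof (rule bound3[where f="\<lambda>a j k i. T ((-1)^i) (int a) * T (om ^ j) (int a) * T (om ^ k) (int a) * EE p (-(int a * n))"])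
    fix i j k :: nat assume "j \<in> {..<1}" "k \<in> {..<1}"
    then show "norm (\<Sum>a\<in>{0<..<p}. T ((-1)^i) (int a) * T (om ^ j) (int a) * T (om ^ k) (int a) * EE p (-(int a * n)))
      \<le> wt ((-1) ^ i) * wt (om ^ j) * wt (om ^ k) * V n ((-1) ^ i * om ^ j * om ^ k)"
      by (intro triple_bound[OF neg_root r1 r1]) auto
  qed
  ultimately show ?thesis unfolding Wsum1 by simp
qed

lemma EE_neg_cong: "a \<le> p \<Longrightarrow> EE p (int (p - a) * x) = EE p (-(int a * x))"
  by (intro EE_cong p_pos) (simp add: cong_iff_dvd_diff of_nat_diff algebra_simps)

lemma Csum_neg: assumes "a \<le> p" shows "Csum i p (int (p - a)) = cnj (Csum i p (int a))"
  unfolding Csum_EE cnj_sum cnj_EE by (intro sum.cong refl) (rule EE_neg_cong[OF assms])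

lemma Ssum_real: "cnj (Ssum n) = Ssum n"
proof -
  define f where "f a = Csum 2 p (int a) * Csum 3 p (int a) ^ 2 * EE p (-(int a * n))" for a
  have fneg: "f (p - a) = cnj (f a)" if "a \<in> {0<..<p}" for a
  proof -
    have e: "EE p (-(int (p - a) * n)) = cnj (EE p (-(int a * n)))"
      using EE_neg_cong[of a "-n"] that by (simp add: cnj_EE)
    have c2: "Csum 2 p (int (p - a)) = cnj (Csum 2 p (int a))" using that by (intro Csum_neg) auto
    have c3: "Csum 3 p (int (p - a)) = cnj (Csum 3 p (int a))" using that by (intro Csum_neg) auto
    show ?thesis unfolding f_def c2 c3 e by simp
  qed
  have "Ssum n = (\<Sum>a\<in>{0<..<p}. f a)" by (simp add: Ssum_def f_def)
  also have "\<dots> = (\<Sum>a\<in>{0<..<p}. f (p - a))"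
    by (rule sum.reindex_bij_witness[of _ "\<lambda>a. p - a" "\<lambda>a. p - a"]) auto
  also have "\<dots> = (\<Sum>a\<in>{0<..<p}. cnj (f a))" by (intro sum.cong refl fneg)
  also have "\<dots> = cnj (Ssum n)" by (simp add: Ssum_def f_def cnj_sum)
  finally show ?thesis by simp
qed

lemma Aterm_real: "Aterm n p = of_real (Re (Aterm n p))"
proof -
  have "cnj (Aterm n p) = Aterm n p" unfolding Aterm_eq using Ssum_real[of n] by simp
  then have "Aterm n p \<in> \<real>" by (simp add: Reals_cnj_iff)
  then show ?thesis by (rule of_real_Re[symmetric])
qed

lemma Aterm_bound:
  "norm (Aterm n p) \<le> (if 3 dvd L then (4 * real p ^ 2 + 6 * real p * sqrt p + 7 * real p + 1) / real L ^ 4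
                       else (real p + 1) / real L ^ 4)"
proof -
  have sp: "sqrt p ^ 2 = real p" "sqrt p ^ 3 = real p * sqrt p" "sqrt p ^ 4 = real p ^ 2"
    by (simp_all add: power3_eq_cube power4_eq_xxxx power2_eq_square)
  have Lp: "real L \<le> real p" by (simp add: L_def)
  have nA: "norm (Aterm n p) = norm (Ssum n) / real L ^ 4"
    unfolding Aterm_eq by (simp add: norm_divide norm_power)
  show ?thesis
  proof (cases "3 dvd L")
    case True
    have "norm (Ssum n) \<le> 4 * real p ^ 2 + 6 * real p * sqrt p + 7 * real p + 1"
    proof -
      have "2 * real L * real p + real L \<le> 4 * real p ^ 2 + 6 * real p * sqrt p + 7 * real p + 1"
      proof -
        have "2 * real L * real p \<le> 2 * real p * real p" using Lp by (intro mult_right_mono) auto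
        moreover have "0 \<le> real p * sqrt p" by simp
        moreover have "0 \<le> real p * real p" by simp
        ultimately show ?thesis using Lp unfolding power2_eq_square mult.assoc by linarith
      qed
      then show ?thesis using Ssum_bound3[OF True, of n] unfolding sp by (auto split: if_splits)
    qed
    then show ?thesis using True nA L_pos by (simp add: divide_right_mono)
  next
    case False
    have "norm (Ssum n) \<le> real p + 1"
      using Ssum_bound1[OF False, of n] Lp unfolding sp by (auto split: if_splits)
    then show ?thesis using False nA L_pos by (simp add: divide_right_mono)
  qed
qed

end

lemma Aterm_prime:
  assumes "prime p" "p \<ge> 5"
  shows "\<exists>\<alpha>. Aterm n p = of_real \<alpha> \<and>
     \<bar>\<alpha>\<bar> \<le> (if 3 dvd (p - 1) then (4 * real p ^ 2 + 6 * real p * sqrt p + 7 * real p + 1) / real (p - 1) ^ 4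
            else (real p + 1) / real (p - 1) ^ 4)"
proof -
  obtain g where g: "residue_primroot p g" using prime_primitive_root_exists[OF _ assms(1)] assms(2) by auto
  have "odd p" using assms prime_odd_nat by fastforce
  then interpret prim p g using assms g by unfold_locales auto
  show ?thesis using Aterm_real[of n] Aterm_bound[of n]
    by (intro exI[of _ "Re (Aterm n p)"]) (metis L_def norm_of_real)
qed


lemma fracle: fixes a b c d :: real
  assumes "b > 0" "d > 0" "a * d \<le> c * b" shows "a / b \<le> c / d"
  using assms by (simp add: field_simps)

lemma f2_tele:
  fixes k :: real assumes k: "k \<ge> 17"
  shows "(k + 1) / (k - 1) ^ 4 \<le> 1 / (k - 2)^2 - 1 / (k - 1)^2"
proof -
  define x where "x = k - 2"
  have x: "x \<ge> 15" using k by (simp add: x_def)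
  have kx: "k = x + 2" by (simp add: x_def)
  have r: "1 / x^2 - 1 / (x + 1)^2 = (2 * x + 1) / (x^2 * (x + 1)^2)"
    using x by (simp add: field_simps) (simp add: algebra_simps power2_eq_square)
  have e: "(2 * x + 1) * (x + 1) ^ 4 - (x + 3) * (x^2 * (x + 1)^2) = (x + 1)^2 * (x^3 + 2 * x^2 + 4 * x + 1)"
    by (simp add: algebra_simps power2_eq_square power3_eq_cube power4_eq_xxxx)
  have nn: "0 \<le> (x + 1)^2 * (x^3 + 2 * x^2 + 4 * x + 1)" using x by (intro mult_nonneg_nonneg) auto
  have "(x + 3) * (x^2 * (x + 1)^2) \<le> (2 * x + 1) * (x + 1) ^ 4" using nn e by linarith
  then have "(x + 3) / (x + 1) ^ 4 \<le> (2 * x + 1) / (x^2 * (x + 1)^2)"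
    using x by (intro fracle) auto
  then have "(x + 3) / (x + 1) ^ 4 \<le> 1 / x^2 - 1 / (x + 1)^2" using r by simp
  then show ?thesis by (simp add: kx algebra_simps)
qed

lemma f1_tele:
  fixes k :: real assumes k: "k \<ge> 19"
  shows "(4 * k^2 + 6 * k * sqrt k + 7 * k + 1) / (k - 1) ^ 4 \<le> (5/6) / (k - 7) - (5/6) / (k - 1)"
proof -
  have s: "sqrt k \<le> k / 10 + 5 / 2"
  proof -
    have "0 \<le> (sqrt k - 5)^2" by simp
    also have "(sqrt k - 5)^2 = k - 10 * sqrt k + 25" using k by (simp add: power2_eq_square algebra_simps)
    finally show ?thesis by simp
  qed
  define x where "x = k - 7"
  have x: "x \<ge> 12" using k by (simp add: x_def)
  have nz: "k - 7 \<noteq> 0" "k - 1 \<noteq> 0" using k by auto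
  have "(5/6) / (k - 7) - (5/6) / (k - 1) = ((5/6) * (k - 1) - (5/6) * (k - 7)) / ((k - 7) * (k - 1))"
    by (rule diff_frac_eq[OF nz])
  also have "(5/6) * (k - 1) - (5/6) * (k - 7) = (5::real)" by (simp add: field_simps)
  finally have r: "(5/6) / (k - 7) - (5/6) / (k - 1) = 5 / ((k - 7) * (k - 1))" .
  have num: "5 * (4 * k^2 + 6 * k * sqrt k + 7 * k + 1) \<le> 23 * k^2 + 110 * k + 5"
  proof -
    have "6 * k * sqrt k \<le> 6 * k * (k / 10 + 5 / 2)" using s k by (intro mult_left_mono) auto
    then show ?thesis by (simp add: algebra_simps power2_eq_square)
  qed
  have poly: "(23 * k^2 + 110 * k + 5) * (k - 7) \<le> 25 * (k - 1) ^ 3"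
  proof -
    have e: "25 * (k - 1) ^ 3 - (23 * k^2 + 110 * k + 5) * (k - 7) = 2 * k * ((k - 6)^2 + 384) + 10"
      by (simp add: algebra_simps power2_eq_square power3_eq_cube)
    have "0 \<le> 2 * k * ((k - 6)^2 + 384)" using k by (intro mult_nonneg_nonneg) auto
    then show ?thesis using e by linarith
  qed
  have "5 * ((4 * k^2 + 6 * k * sqrt k + 7 * k + 1) * ((k - 7) * (k - 1))) \<le> (23 * k^2 + 110 * k + 5) * ((k - 7) * (k - 1))"
    using num k by (simp only: mult.assoc[symmetric]) (intro mult_right_mono, auto)
  also have "\<dots> = ((23 * k^2 + 110 * k + 5) * (k - 7)) * (k - 1)" by (simp add: mult_ac)
  also have "\<dots> \<le> (25 * (k - 1) ^ 3) * (k - 1)" using poly k by (intro mult_right_mono) auto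
  also have "\<dots> = 5 * (5 * (k - 1) ^ 4)" by (simp add: power4_eq_xxxx power3_eq_cube mult_ac)
  finally have "(4 * k^2 + 6 * k * sqrt k + 7 * k + 1) * ((k - 7) * (k - 1)) \<le> 5 * (k - 1) ^ 4" by (simp add: mult_ac)
  then have "(4 * k^2 + 6 * k * sqrt k + 7 * k + 1) / (k - 1) ^ 4 \<le> 5 / ((k - 7) * (k - 1))"
    using k by (intro fracle) auto
  then show ?thesis using r by simp
qed


definition f1 :: "real \<Rightarrow> real" where
  "f1 k = (4 * k^2 + 6 * k * sqrt k + 7 * k + 1) / (k - 1) ^ 4"
definition f2 :: "real \<Rightarrow> real" where
  "f2 k = (k + 1) / (k - 1) ^ 4"

definition g1 :: "nat \<Rightarrow> real" where "g1 k = (if 19 \<le> k \<and> k mod 6 = 1 then f1 (real k) else 0)"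
definition g2 :: "nat \<Rightarrow> real" where "g2 k = (if 17 \<le> k then f2 (real k) else 0)"

lemma f1_nonneg: "k \<ge> 2 \<Longrightarrow> f1 k \<ge> 0"
  unfolding f1_def by (intro divide_nonneg_pos) auto

lemma f2_nonneg: "k \<ge> 2 \<Longrightarrow> f2 k \<ge> 0"
  unfolding f2_def by (intro divide_nonneg_pos) auto

lemma g1_nonneg: "g1 k \<ge> 0" by (simp add: g1_def f1_nonneg)
lemma g2_nonneg: "g2 k \<ge> 0" by (simp add: g2_def f2_nonneg)

lemma sum_g2: "(\<Sum>k<N. g2 k) \<le> 1 / 225"
proof -
  define \<Phi> where "\<Phi> N = (if N \<le> 17 then 1/225 else 1 / (real N - 2)^2)" for N :: nat
  have "(\<Sum>k<N. g2 k) + \<Phi> N \<le> 1 / 225"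
  proof (induction N)
    case 0 then show ?case by (simp add: \<Phi>_def)
  next
    case (Suc N)
    show ?case
    proof (cases "N < 17")
      case True
      then have "g2 N = 0" "\<Phi> (Suc N) = \<Phi> N" by (auto simp: g2_def \<Phi>_def)
      then show ?thesis using Suc by simp
    next
      case False
      have "\<Phi> N = 1 / (real N - 2)^2" using False by (auto simp: \<Phi>_def)
      moreover have "\<Phi> (Suc N) = 1 / (real N - 1)^2" using False by (auto simp: \<Phi>_def)
      moreover have "g2 N \<le> 1 / (real N - 2)^2 - 1 / (real N - 1)^2"
        using False f2_tele[of "real N"] by (simp add: g2_def f2_def)
      ultimately show ?thesis using Suc by simp
    qed
  qed
  moreover have "\<Phi> N \<ge> 0" by (simp add: \<Phi>_def)
  ultimately show ?thesis by linarith
qed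

lemma sum_h1: "(\<Sum>j<M. f1 (6 * real j + 19)) \<le> 5/72 - (5/6) / (6 * real M + 12)"
proof (induction M)
  case 0 then show ?case by simp
next
  case (Suc M)
  have "f1 (6 * real M + 19) \<le> (5/6) / ((6 * real M + 19) - 7) - (5/6) / ((6 * real M + 19) - 1)"
    unfolding f1_def by (rule f1_tele) simp
  also have "\<dots> = (5/6) / (6 * real M + 12) - (5/6) / (6 * real (Suc M) + 12)"
    by (simp add: algebra_simps)
  finally show ?case using Suc by simp
qed

lemma sum_g1: "(\<Sum>k<N. g1 k) \<le> 5/72"
proof -
  define S where "S = {k \<in> {..<N}. 19 \<le> k \<and> k mod 6 = 1}"
  have "(\<Sum>k<N. g1 k) = (\<Sum>k\<in>S. f1 (real k))"
    unfolding S_def g1_def by (rule sum.inter_filter[symmetric]) simp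
  also have "\<dots> \<le> (\<Sum>k\<in>(\<lambda>j. 6 * j + 19) ` {..<N}. f1 (real k))"
  proof (rule sum_mono2)
    show "S \<subseteq> (\<lambda>j. 6 * j + 19) ` {..<N}"
    proof
      fix k assume "k \<in> S"
      then have k: "k < N" "19 \<le> k" "k mod 6 = 1" by (auto simp: S_def)
      then have "k = 6 * ((k - 19) div 6) + 19" by presburger
      moreover have "(k - 19) div 6 < N" using k by linarith
      ultimately show "k \<in> (\<lambda>j. 6 * j + 19) ` {..<N}" by blast
    qed
  qed (auto intro!: f1_nonneg)
  also have "\<dots> = (\<Sum>j<N. f1 (6 * real j + 19))"
    by (subst sum.reindex) (auto simp: inj_on_def)
  also have "\<dots> \<le> 5/72 - (5/6) / (6 * real N + 12)" by (rule sum_h1)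
  also have "\<dots> \<le> 5/72" by simp
  finally show ?thesis .
qed

lemma prod_lower:
  fixes x y :: "nat \<Rightarrow> real"
  assumes xy: "\<And>k. \<bar>x k\<bar> \<le> y k" and y1: "\<And>k. y k \<le> 1"
  shows "1 - (\<Sum>k<N. y k) \<le> (\<Prod>k<N. 1 + x k) \<and> 0 \<le> (\<Prod>k<N. 1 + x k)"
proof (induction N)
  case 0 then show ?case by simp
next
  case (Suc N)
  define P where "P = (\<Prod>k<N. 1 + x k)"
  define S where "S = (\<Sum>k<N. y k)"
  have P: "1 - S \<le> P" "0 \<le> P" using Suc by (simp_all add: P_def S_def)
  have S: "0 \<le> S" unfolding S_def using xy by (intro sum_nonneg) (metis abs_ge_zero order.trans)
  have x1: "1 - y N \<le> 1 + x N" using xy[of N] by linarith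
  have y0: "0 \<le> 1 - y N" using y1[of N] by simp
  have yN: "0 \<le> y N" using xy[of N] by (metis abs_ge_zero order.trans)
  have "(1 - S) * (1 - y N) \<le> P * (1 - y N)" using P y0 by (intro mult_right_mono) auto
  also have "\<dots> \<le> P * (1 + x N)" using P x1 by (intro mult_left_mono) auto
  finally have "(1 - S) * (1 - y N) \<le> P * (1 + x N)" .
  moreover have "1 - (S + y N) \<le> (1 - S) * (1 - y N)" using S yN by (simp add: algebra_simps)
  moreover have "0 \<le> P * (1 + x N)" using P x1 y0 by simp
  ultimately show ?case by (simp add: P_def S_def)
qed


lemma prime5: "prime (5::nat)"
proof -
  have "{2..<5::nat} = {2,3,4}" by auto
  then show ?thesis by (simp add: prime_nat_iff')
qed

lemma prime11: "prime (11::nat)"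
proof -
  have "{2..<11::nat} = {2,3,4,5,6,7,8,9,10}" by auto
  then show ?thesis by (simp add: prime_nat_iff')
qed

theorem lemma2p3:
  fixes n :: int
  shows "\<exists>P r. ((\<lambda>p::nat. if prime p \<and> p \<ge> 17 then 1 + Aterm n p else 1) has_prod P) \<and>
           (1 + Aterm n 5) * (1 + Aterm n 11) * P = complex_of_real r \<and>
           r \<ge> 0.902985"
proof -
  have bnd: "Aterm n p = of_real (Re (Aterm n p)) \<and>
     \<bar>Re (Aterm n p)\<bar> \<le> (if 3 dvd (p - 1) then (4 * real p ^ 2 + 6 * real p * sqrt p + 7 * real p + 1) / real (p - 1) ^ 4
            else (real p + 1) / real (p - 1) ^ 4)" if pp: "prime p" "p \<ge> 5" for p
  proof -
    obtain \<alpha> where "Aterm n p = of_real \<alpha>" and "\<bar>\<alpha>\<bar> \<le> (if 3 dvd (p - 1) then (4 * real p ^ 2 + 6 * real p * sqrt p + 7 * real p + 1) / real (p - 1) ^ 4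
            else (real p + 1) / real (p - 1) ^ 4)" using Aterm_prime[OF pp, of n] by blast
    then show ?thesis by simp
  qed
  define B :: real where "B = 5/72 + 1/225"
  define a where "a k = (if prime k \<and> 17 \<le> k then Re (Aterm n k) else 0)" for k
  define y where "y k = g1 k + g2 k" for k
  have y0: "0 \<le> y k" for k by (simp add: y_def g1_nonneg g2_nonneg add_nonneg_nonneg)
  have ay: "\<bar>a k\<bar> \<le> y k" for k
  proof (cases "prime k \<and> 17 \<le> k")
    case False then have "a k = 0" unfolding a_def by auto
    then show ?thesis using y0[of k] by simp
  next
    case True
    then have pk: "prime k" "k \<ge> 17" by auto
    have rk: "real (k - 1) = real k - 1" using pk by (simp add: of_nat_diff)
    have b: "\<bar>a k\<bar> \<le> (if 3 dvd (k - 1) then (4 * real k ^ 2 + 6 * real k * sqrt k + 7 * real k + 1) / real (k - 1) ^ 4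
            else (real k + 1) / real (k - 1) ^ 4)" using bnd[of k] pk by (simp add: a_def)
    show ?thesis
    proof (cases "3 dvd (k - 1)")
      case True
      have "odd k" using pk prime_odd_nat by fastforce
      then have "k mod 6 = 1" "19 \<le> k" using True pk(2) by presburger+
      then have "g1 k = f1 (real k)" by (simp add: g1_def)
      then have "\<bar>a k\<bar> \<le> g1 k" using b[unfolded rk] True by (simp add: f1_def)
      then show ?thesis using g2_nonneg[of k] by (simp add: y_def)
    next
      case False
      have "g2 k = f2 (real k)" using pk by (simp add: g2_def)
      then have "\<bar>a k\<bar> \<le> g2 k" using b[unfolded rk] False by (simp add: f2_def)
      then show ?thesis using g1_nonneg[of k] by (simp add: y_def)
    qed
  qed
  have ysum: "(\<Sum>k<N. y k) \<le> B" for N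
    using sum_g1[of N] sum_g2[of N] by (simp add: y_def sum.distrib B_def)
  have yB: "y k \<le> B" for k
  proof -
    have "y k \<le> (\<Sum>j<Suc k. y j)" by (rule member_le_sum) (auto intro: y0)
    then show ?thesis using ysum[of "Suc k"] by simp
  qed
  have y1: "y k \<le> 1" for k using yB[of k] by (simp add: B_def)
  have sy: "summable y" by (rule summableI_nonneg_bounded[OF y0 ysum])
  have sa: "summable (\<lambda>k. \<bar>a k\<bar>)" by (rule summable_comparison_test'[OF sy]) (simp add: ay)
  have nm1: "a k \<noteq> -1" for k using ay[of k] yB[of k] by (auto simp: B_def)
  have cp: "convergent_prod (\<lambda>k. 1 + a k)" by (rule summable_imp_convergent_prod_real[OF sa nm1])
  define P where "P = prodinf (\<lambda>k. 1 + a k)"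
  have hp: "(\<lambda>k. 1 + a k) has_prod P" using cp convergent_prod_has_prod_iff P_def by blast
  have lim: "(\<lambda>N. \<Prod>k<N. 1 + a k) \<longlonglongrightarrow> P" by (rule has_prod_imp_tendsto'[OF hp])
  have P_ge: "1 - B \<le> P"
  proof (rule LIMSEQ_le_const[OF lim], intro exI allI impI)
    fix N :: nat
    have "1 - (\<Sum>k<N. y k) \<le> (\<Prod>k<N. 1 + a k)" using prod_lower[of a y N, OF ay y1] by simp
    then show "1 - B \<le> (\<Prod>k<N. 1 + a k)" using ysum[of N] by linarith
  qed
  have feq: "(\<lambda>p::nat. if prime p \<and> p \<ge> 17 then 1 + Aterm n p else 1) = (\<lambda>k. complex_of_real (1 + a k))"
  proof
    fix k :: nat
    show "(if prime k \<and> k \<ge> 17 then 1 + Aterm n k else 1) = complex_of_real (1 + a k)"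
      using bnd[of k] by (auto simp: a_def)
  qed
  have hpc: "(\<lambda>p::nat. if prime p \<and> p \<ge> 17 then 1 + Aterm n p else 1) has_prod complex_of_real P"
    unfolding feq by (rule has_prod_of_real_iff[THEN iffD2, OF hp])
  define a5 where "a5 = Re (Aterm n 5)"
  define a11 where "a11 = Re (Aterm n 11)"
  have e5: "Aterm n 5 = of_real a5" and b5: "\<bar>a5\<bar> \<le> 6 / 256"
    using bnd[of 5] prime5 by (simp_all add: a5_def)
  have e11: "Aterm n 11 = of_real a11" and b11: "\<bar>a11\<bar> \<le> 12 / 10000"
    using bnd[of 11] prime11 by (simp_all add: a11_def)
  define r where "r = (1 + a5) * (1 + a11) * P"
  have eq: "(1 + Aterm n 5) * (1 + Aterm n 11) * complex_of_real P = complex_of_real r"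
    by (simp add: e5 e11 r_def)
  have m1: "(1 - 6/256) * (1 - 12/10000) \<le> (1 + a5) * (1 + a11)"
    using b5 b11 by (intro mult_mono) auto
  have m0: "0 \<le> (1 + a5) * (1 + a11)" using b5 b11 by (intro mult_nonneg_nonneg) auto
  have "(1 - 6/256) * (1 - 12/10000) * (1 - B) \<le> (1 + a5) * (1 + a11) * P"
    by (rule mult_mono[OF m1 P_ge m0]) (simp add: B_def)
  moreover have "(0.902985::real) \<le> (1 - 6/256) * (1 - 12/10000) * (1 - B)" by (simp add: B_def)
  ultimately have "r \<ge> 0.902985" by (simp add: r_def)
  then show ?thesis using hpc eq by blast
qed


end
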